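(* Consider the following single-beam millimeter-wave NOMA downlink model. Fix an integer $M\ge1$, parameters $\alpha,\phi,\lambda,R_{\mathcal{D}},\Delta>0$ and a beam direction $\bar\theta$. Let $\mathbf{a}(\theta)=\frac{1}{\sqrt{M}}(1,e^{-\mathrm{j}\pi\theta},\dots,e^{-\mathrm{j}\pi(M-1)\theta})^T$ and $\mathbf{p}=\mathbf{a}(\bar\theta)$. Conditioned on there being $K\ge2$ users in the sector $\mathcal{D}_\theta=\{(r,\theta):0\le r\le R_{\mathcal{D}},|\theta-\bar\theta|\le\Delta\}$, the users' polar positions $(r_k,\theta_k)$ are i.i.d. with density $\frac{\phi^2e^{-\phi r}r}{2\Delta\gamma(2,R_{\mathcal{D}}\phi)}$ w.r.t. $dr\,d\theta$ on $[0,R_{\mathcal{D}}]\times[\bar\theta-\Delta,\bar\theta+\Delta]$, and user $k$ has channel $\mathbf{h}_k=\sqrt{M}\frac{a_k\mathbf{a}(\theta_k)}{\sqrt{1+r_k^\alpha}}$ with $a_k$ i.i.d. $\mathcal{CN}(0,1)$ independent of the positions. Users are indexed so that $|\mathbf{h}_1^H\mathbf{p}|^2\le\dots\le|\mathbf{h}_K^H\mathbf{p}|^2$. Fix $1\le i<j\le K$, power coefficients $\beta_i\ge\beta_j\ge0$ with $\beta_i^2+\beta_j^2=1$, transmit SNR $\rho>0$, target rates $R_i,R_j>0$ and $\epsilon_i=2^{R_i}-1$, $\epsilon_j=2^{R_j}-1$. Define $\mathrm{SINR}_i=\frac{|\mathbf{h}_i^H\mathbf{p}|^2\beta_i^2}{|\mathbf{h}_i^H\mathbf{p}|^2\beta_j^2+1/\rho}$,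 $\mathrm{SINR}_{i\to j}=\frac{|\mathbf{h}_j^H\mathbf{p}|^2\beta_i^2}{|\mathbf{h}_j^H\mathbf{p}|^2\beta_j^2+1/\rho}$, $\mathrm{SINR}_j=\rho|\mathbf{h}_j^H\mathbf{p}|^2\beta_j^2$, and the conditional outage probabilities $\mathrm{P}^o_{i|K}=\mathrm{P}(\mathrm{SINR}_i<\epsilon_i\mid K)$ and $\mathrm{P}^o_{j|K}=1-\mathrm{P}(\mathrm{SINR}_{i\to j}>\epsilon_i,\ \mathrm{SINR}_j>\epsilon_j\mid K)$. If $\beta_i^2\le\beta_j^2\epsilon_i$ then $\mathrm{P}^o_{j|K}=1$. If $\beta_i^2>\beta_j^2\epsilon_i$, then $$\mathrm{P}^o_{j|K}=c_j\sum_{p=0}^{K-j}\binom{K-j}{p}(-1)^p\frac{F_{\pi(j)}^{j+p}(\eta_j)}{j+p},\qquad \eta_j=\max\left\{\frac{\epsilon_i/\rho}{\beta_i^2-\beta_j^2\epsilon_i},\frac{\epsilon_j}{\rho\beta_j^2}\right\},$$ and $$\mathrm{P}^o_{i|K}=c_i\sum_{p=0}^{K-i}\binom{K-i}{p}(-1)^p\frac{F_{\pi(j)}^{i+p}(\eta_i)}{i+p},\qquad \eta_i=\frac{\epsilon_i/\rho}{\beta_i^2-\beta_j^2\epsilon_i},$$ where $c_k=\frac{K!}{(k-1)!(K-k)!}$ and $F_{\pi(j)}(y)=\int_{\bar\theta-\Delta}^{\bar\theta+\Delta}\int_0^{R_{\mathcal{D}}}\Big(1-e^{-\frac{y(1+r^\alpha)}{F_M(\pi[\bar\theta-\theta])}}\Big)\frac{\phi^2e^{-\phi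 r}}{2\Delta\gamma(2,R_{\mathcal{D}}\phi)}r\,dr\,d\theta$.
   Context: $F_M(x)=\frac{\sin^2(Mx/2)}{M\sin^2(x/2)}$ is the Fejér kernel; $\gamma(s,x)=\int_0^xt^{s-1}e^{-t}dt$ is the lower incomplete gamma function; $\mathrm{j}=\sqrt{-1}$. $F_{\pi(j)}$ is the common CDF of an unordered effective channel gain $|\mathbf{h}_k^H\mathbf{p}|^2$. *)

theory Defs
  imports "HOL-Probability.Probability"
begin

definition lower_gamma :: "real \<Rightarrow> real \<Rightarrow> real" where
  "lower_gamma s x = (LBINT t=0..x. t powr (s - 1) * exp (- t))"

text \<open>Fejer kernel F_M(x) = sin^2(Mx/2) / (M sin^2(x/2)), with its removable
  singularity (value M) filled in where sin(x/2) = 0.\<close>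
definition fejer :: "nat \<Rightarrow> real \<Rightarrow> real" where
  "fejer M x = (if sin (x / 2) = 0 then real M
                else (sin (real M * x / 2))\<^sup>2 / (real M * (sin (x / 2))\<^sup>2))"

definition steer :: "nat \<Rightarrow> real \<Rightarrow> nat \<Rightarrow> complex" where
  "steer M \<theta> m = exp (- \<i> * complex_of_real (pi * real m * \<theta>)) / complex_of_real (sqrt (real M))"

definition chan :: "nat \<Rightarrow> real \<Rightarrow> real \<Rightarrow> real \<Rightarrow> complex \<Rightarrow> nat \<Rightarrow> complex" where
  "chan M \<alpha> r \<theta> a m = complex_of_real (sqrt (real M)) * a * steer M \<theta> m
                          / complex_of_real (sqrt (1 + r powr \<alpha>))"

definition herm :: "nat \<Rightarrow> (nat \<Rightarrow> complex) \<Rightarrow> (nat \<Rightarrow> complex) \<Rightarrow> complex" where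
  "herm M h p = (\<Sum>m<M. cnj (h m) * p m)"

definition gain :: "nat \<Rightarrow> real \<Rightarrow> real \<Rightarrow> real \<Rightarrow> real \<Rightarrow> complex \<Rightarrow> real" where
  "gain M \<alpha> \<theta>b r \<theta> a = (cmod (herm M (chan M \<alpha> r \<theta> a) (steer M \<theta>b)))\<^sup>2"

text \<open>k-th smallest (1-indexed) among g 0, ..., g (K-1).\<close>
definition ord_stat :: "nat \<Rightarrow> (nat \<Rightarrow> real) \<Rightarrow> nat \<Rightarrow> real" where
  "ord_stat K g k = sort (map g [0..<K]) ! (k - 1)"

text \<open>Common CDF F_pi of an unordered effective channel gain.\<close>
definition Fpi :: "nat \<Rightarrow> real \<Rightarrow> real \<Rightarrow> real \<Rightarrow> real \<Rightarrow> real \<Rightarrow> real \<Rightarrow> real" where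
  "Fpi M \<alpha> \<phi> RD \<Delta> \<theta>b y =
     (LBINT \<theta>=\<theta>b-\<Delta>..\<theta>b+\<Delta>. (LBINT r=0..RD.
        (1 - exp (- (y * (1 + r powr \<alpha>)) / fejer M (pi * (\<theta>b - \<theta>))))
        * (\<phi>\<^sup>2 * exp (- \<phi> * r) / (2 * \<Delta> * lower_gamma 2 (RD * \<phi>))) * r))"

text \<open>Joint density of (r_k, theta_k, a_k): position density times CN(0,1) density.\<close>
definition user_density :: "real \<Rightarrow> real \<Rightarrow> real \<Rightarrow> real \<Rightarrow> real \<times> real \<times> complex \<Rightarrow> ennreal" where
  "user_density \<phi> RD \<Delta> \<theta>b = (\<lambda>(r, \<theta>, z).
     ennreal (indicator ({0..RD} \<times> {\<theta>b-\<Delta>..\<theta>b+\<Delta>}) (r, \<theta>)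
        * (\<phi>\<^sup>2 * exp (- \<phi> * r) * r / (2 * \<Delta> * lower_gamma 2 (RD * \<phi>)))
        * (exp (- (cmod z)\<^sup>2) / pi)))"

definition coef :: "nat \<Rightarrow> nat \<Rightarrow> real" where
  "coef K k = fact K / (fact (k - 1) * fact (K - k))"

definition order_cdf_sum :: "nat \<Rightarrow> nat \<Rightarrow> real \<Rightarrow> real" where
  "order_cdf_sum K k F = coef K k * (\<Sum>p=0..K-k. real (K - k choose p) * (-1) ^ p * F ^ (k + p) / real (k + p))"

end

theory Submission
  imports Defs
begin

definition Tsum :: "nat \<Rightarrow> nat \<Rightarrow> real \<Rightarrow> real" where
  "Tsum K k p = (\<Sum>m=k..K. real (K choose m) * p ^ m * (1 - p) ^ (K - m))"

lemma div_aux: fixes F y z n :: real assumes "y \<noteq> 0" "z \<noteq> 0" "n \<noteq> 0"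
  shows "F / (y * z) = F / ((n * y) * z) * n" using assms by (simp add: field_simps)

lemma coef_eq: assumes "1 \<le> k" "k \<le> K" shows "coef K k = real (K choose k) * real k"
proof -
  obtain k' where k: "k = Suc k'" using assms by (cases k) auto
  have b: "real (K choose k) = fact K / (fact k * fact (K - k))"
    using assms by (simp add: binomial_fact)
  have f: "(fact k :: real) = real (Suc k') * fact k'" using k by (simp del: of_nat_Suc)
  have "coef K k = fact K / (fact k' * fact (K - k))" unfolding coef_def k by simp
  also have "\<dots> = fact K / ((real (Suc k') * fact k') * fact (K - k)) * real (Suc k')"
    by (rule div_aux) auto
  also have "\<dots> = real (K choose k) * real k" by (metis b f k)
  finally show ?thesis .
qed

lemma coef_eq2: assumes "k < K" "K - k = Suc e" shows "coef K (Suc k) = real (K choose k) * real (Suc e)"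
proof -
  have b: "real (K choose k) = fact K / (fact k * fact (K - k))"
    using assms by (simp add: binomial_fact)
  have f: "(fact (K - k) :: real) = real (Suc e) * fact e" using assms by (simp del: of_nat_Suc)
  have Ke: "K - Suc k = e" using assms by simp
  have "coef K (Suc k) = fact K / (fact e * fact k)" unfolding coef_def Ke by simp
  also have "\<dots> = fact K / ((real (Suc e) * fact e) * fact k) * real (Suc e)"
    by (rule div_aux) auto
  also have "\<dots> = real (K choose k) * real (Suc e)" unfolding b f by (simp add: mult.commute)
  finally show ?thesis .
qed

lemma d1_aux: "((\<lambda>p::real. C * p ^ Suc k' * (1 - p) ^ Suc e) has_real_derivative
      C * (real (Suc k') * p ^ k' * (1 - p) ^ Suc e - real (Suc e) * p ^ Suc k' * (1 - p) ^ e)) (at p)"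
proof -
  have a: "((\<lambda>p::real. C * p ^ Suc k') has_real_derivative C * (real (Suc k') * p ^ k')) (at p)"
    using DERIV_cmult[OF DERIV_pow[of "Suc k'" p]] by simp
  have b: "((\<lambda>p::real. (1 - p) ^ Suc e) has_real_derivative - (real (Suc e) * (1 - p) ^ e)) (at p)"
    using DERIV_power[OF DERIV_diff[OF DERIV_const[of 1] DERIV_ident], of "Suc e"] by simp
  show ?thesis using DERIV_mult[OF a b] by (simp add: algebra_simps)
qed

lemma Tsum_deriv:
  assumes "1 \<le> k" "k \<le> K"
  shows "(Tsum K k has_real_derivative coef K k * p ^ (k - 1) * (1 - p) ^ (K - k)) (at p)"
  using assms
proof (induction "K - k" arbitrary: k)
  case 0
  then have kK: "k = K" by simp
  have T: "Tsum K k = (\<lambda>p. p ^ K)" unfolding Tsum_def kK by simp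
  have "coef K k = real K" using coef_eq[OF 0(2,3)] kK by simp
  then show ?case unfolding T using kK DERIV_pow[of K p] by simp
next
  case (Suc d)
  then have lt: "k < K" by simp
  have IH: "(Tsum K (Suc k) has_real_derivative coef K (Suc k) * p ^ k * (1 - p) ^ (K - Suc k)) (at p)"
    using Suc(1)[of "Suc k"] Suc(2) lt by simp
  obtain k' where k: "k = Suc k'" using Suc(3) by (cases k) auto
  obtain e where e: "K - k = Suc e" using lt by (cases "K - k") auto
  have KSk: "K - Suc k = e" using e by simp
  have T: "Tsum K k = (\<lambda>p. real (K choose k) * p ^ k * (1 - p) ^ (K - k) + Tsum K (Suc k) p)"
  proof
    fix p
    show "Tsum K k p = real (K choose k) * p ^ k * (1 - p) ^ (K - k) + Tsum K (Suc k) p"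
      unfolding Tsum_def using lt by (subst sum.atLeast_Suc_atMost) simp_all
  qed
  have c1: "coef K k = real (K choose k) * real k" using coef_eq Suc(3,4) by simp
  have c2: "coef K (Suc k) = real (K choose k) * real (Suc e)" using coef_eq2 lt e by simp
  have d1: "((\<lambda>p. real (K choose k) * p ^ Suc k' * (1 - p) ^ Suc e) has_real_derivative
      real (K choose k) * (real (Suc k') * p ^ k' * (1 - p) ^ Suc e - real (Suc e) * p ^ Suc k' * (1 - p) ^ e)) (at p)"
    by (rule d1_aux)
  have IH': "(Tsum K (Suc k) has_real_derivative coef K (Suc k) * p ^ Suc k' * (1 - p) ^ e) (at p)"
    using IH unfolding KSk by (simp add: k)
  have T': "Tsum K k = (\<lambda>p. real (K choose k) * p ^ Suc k' * (1 - p) ^ Suc e + Tsum K (Suc k) p)"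
  proof -
    have e': "K - Suc k' = Suc e" using e k by simp
    show ?thesis unfolding T by (simp only: e' k)
  qed
  have "(Tsum K k has_real_derivative
      real (K choose k) * (real (Suc k') * p ^ k' * (1 - p) ^ Suc e - real (Suc e) * p ^ Suc k' * (1 - p) ^ e)
      + coef K (Suc k) * p ^ Suc k' * (1 - p) ^ e) (at p)"
    unfolding T' by (rule DERIV_add[OF d1 IH'])
  moreover have "k - 1 = k'" "K - k = Suc e" using k e by auto
  ultimately show ?case unfolding c1 c2 by (simp add: k algebra_simps)
qed

lemma Rsum_deriv:
  assumes "1 \<le> k" "k \<le> K"
  shows "(order_cdf_sum K k has_real_derivative coef K k * p ^ (k - 1) * (1 - p) ^ (K - k)) (at p)"
proof -
  obtain k' where k: "k = Suc k'" using assms by (cases k) auto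
  define n where "n = K - k"
  have eq: "order_cdf_sum K k = (\<lambda>p. coef K k * (\<Sum>q\<le>n. real (n choose q) * (-1) ^ q * p ^ (k + q) / real (k + q)))"
    unfolding order_cdf_sum_def n_def by (auto simp: atLeast0AtMost)
  have s: "(\<Sum>q\<le>n. real (n choose q) * (-1) ^ q * (real (k + q) * p ^ (k + q - 1)) / real (k + q))
      = p ^ (k - 1) * (1 - p) ^ n"
  proof -
    have "(\<Sum>q\<le>n. real (n choose q) * (-1) ^ q * (real (k + q) * p ^ (k + q - 1)) / real (k + q))
       = (\<Sum>q\<le>n. p ^ k' * (real (n choose q) * (- p) ^ q * 1 ^ (n - q)))"
    proof (intro sum.cong refl)
      fix q assume "q \<in> {..n}"
      have nz: "real (k + q) \<noteq> 0" using k by simp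
      have pw: "p ^ (k + q - 1) = p ^ k' * p ^ q" using k by (simp add: power_add)
      have pm: "(- p) ^ q = (-1) ^ q * p ^ q" by (rule power_minus)
      show "real (n choose q) * (-1) ^ q * (real (k + q) * p ^ (k + q - 1)) / real (k + q)
         = p ^ k' * (real (n choose q) * (- p) ^ q * 1 ^ (n - q))"
        unfolding pw pm using nz by (simp add: field_simps)
    qed
    also have "\<dots> = p ^ k' * (- p + 1) ^ n" unfolding binomial_ring[of "-p" 1 n] by (simp add: sum_distrib_left)
    finally show ?thesis by (simp add: k)
  qed
  have t: "((\<lambda>p. real (n choose q) * (-1) ^ q * p ^ (k + q) / real (k + q)) has_real_derivative
        real (n choose q) * (-1) ^ q * (real (k + q) * p ^ (k + q - 1)) / real (k + q)) (at p)" for q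
    using DERIV_cdivide[OF DERIV_cmult[OF DERIV_pow[of "k+q" p], of "real (n choose q) * (-1) ^ q"], of "real (k+q)"]
    by simp
  have "((\<lambda>p. \<Sum>q\<le>n. real (n choose q) * (-1) ^ q * p ^ (k + q) / real (k + q)) has_real_derivative
      (\<Sum>q\<le>n. real (n choose q) * (-1) ^ q * (real (k + q) * p ^ (k + q - 1)) / real (k + q))) (at p)"
    by (rule DERIV_sum) (use t in auto)
  then have "((\<lambda>p. coef K k * (\<Sum>q\<le>n. real (n choose q) * (-1) ^ q * p ^ (k + q) / real (k + q))) has_real_derivative
      coef K k * (p ^ (k - 1) * (1 - p) ^ n)) (at p)" unfolding s by (rule DERIV_cmult)
  then show ?thesis unfolding eq n_def by (simp add: mult.assoc)
qed

lemma Tsum_eq: assumes "1 \<le> k" "k \<le> K" shows "Tsum K k p = order_cdf_sum K k p"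
proof -
  have "\<forall>x. ((\<lambda>p. Tsum K k p - order_cdf_sum K k p) has_real_derivative 0) (at x)"
  proof
    fix x
    show "((\<lambda>p. Tsum K k p - order_cdf_sum K k p) has_real_derivative 0) (at x)"
      using DERIV_diff[OF Tsum_deriv[OF assms, of x] Rsum_deriv[OF assms, of x]] by simp
  qed
  then have "Tsum K k p - order_cdf_sum K k p = Tsum K k 0 - order_cdf_sum K k 0"
    by (rule DERIV_isconst_all)
  moreover have "Tsum K k 0 = 0" using assms by (auto simp: Tsum_def intro!: sum.neutral)
  moreover have "order_cdf_sum K k 0 = 0" using assms
    by (auto simp: order_cdf_sum_def intro!: sum.neutral)
  ultimately show ?thesis by simp
qed

lemma sorted_nth_pred:
  fixes s :: "real list"
  assumes "sorted s" "1 \<le> k" "k \<le> length s"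
    and mono: "\<And>x x'. x \<le> x' \<Longrightarrow> P x' \<Longrightarrow> P x"
  shows "P (s ! (k - 1)) \<longleftrightarrow> k \<le> length (filter P s)"
proof -
  have L: "length (filter P s) = card {i. i < length s \<and> P (s ! i)}"
    by (rule length_filter_conv_card)
  show ?thesis
  proof
    assume H: "P (s ! (k - 1))"
    have "{..<k} \<subseteq> {i. i < length s \<and> P (s ! i)}"
    proof
      fix i assume "i \<in> {..<k}"
      then have "i \<le> k - 1" "i < length s" using assms by auto
      then have "s ! i \<le> s ! (k - 1)" using assms(1,3) assms(2)
        by (intro sorted_nth_mono) auto
      then show "i \<in> {i. i < length s \<and> P (s ! i)}" using H mono \<open>i < length s\<close> by auto
    qed
    then have "card {..<k} \<le> card {i. i < length s \<and> P (s ! i)}"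
      by (intro card_mono) auto
    then show "k \<le> length (filter P s)" using L by simp
  next
    assume H: "k \<le> length (filter P s)"
    show "P (s ! (k - 1))"
    proof (rule ccontr)
      assume N: "\<not> P (s ! (k - 1))"
      have "{i. i < length s \<and> P (s ! i)} \<subseteq> {..<k-1}"
      proof
        fix i assume i: "i \<in> {i. i < length s \<and> P (s ! i)}"
        show "i \<in> {..<k-1}"
        proof (rule ccontr)
          assume "i \<notin> {..<k-1}"
          then have "k - 1 \<le> i" by simp
          then have "s ! (k - 1) \<le> s ! i" using assms(1) i by (intro sorted_nth_mono) auto
          then show False using N mono i by auto
        qed
      qed
      then have "card {i. i < length s \<and> P (s ! i)} \<le> card {..<k-1}"
        by (intro card_mono) auto
      then show False using H L assms(2) by simp
    qed
  qed
qed

lemma ord_stat_pred: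
  fixes g :: "nat \<Rightarrow> real"
  assumes "1 \<le> k" "k \<le> K"
    and mono: "\<And>x x'. x \<le> x' \<Longrightarrow> P x' \<Longrightarrow> P x"
  shows "P (ord_stat K g k) \<longleftrightarrow> k \<le> card {l. l < K \<and> P (g l)}"
proof -
  have "P (ord_stat K g k) \<longleftrightarrow> k \<le> length (filter P (sort (map g [0..<K])))"
    unfolding ord_stat_def using assms by (intro sorted_nth_pred) auto
  also have "length (filter P (sort (map g [0..<K]))) = length (filter P (map g [0..<K]))"
    by (simp add: filter_sort)
  also have "\<dots> = card {l. l < K \<and> P (g l)}"
    by (simp add: length_filter_conv_card cong: conj_cong)
  finally show ?thesis .
qed

lemma sum_subsets_card:
  fixes f :: "nat \<Rightarrow> real"
  assumes "k \<le> K"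
  shows "(\<Sum>S\<in>{S. S \<subseteq> {..<K} \<and> k \<le> card S}. f (card S)) = (\<Sum>m=k..K. real (K choose m) * f m)"
proof -
  have U: "{S. S \<subseteq> {..<K} \<and> k \<le> card S} = (\<Union>m\<in>{k..K}. {S. S \<subseteq> {..<K} \<and> card S = m})"
  proof (rule set_eqI, rule iffI)
    fix S assume "S \<in> {S. S \<subseteq> {..<K} \<and> k \<le> card S}"
    moreover then have "card S \<le> K" using card_mono[of "{..<K}" S] by auto
    ultimately show "S \<in> (\<Union>m\<in>{k..K}. {S. S \<subseteq> {..<K} \<and> card S = m})" by auto
  qed auto
  have "(\<Sum>S\<in>{S. S \<subseteq> {..<K} \<and> k \<le> card S}. f (card S))
      = (\<Sum>m\<in>{k..K}. \<Sum>S\<in>{S. S \<subseteq> {..<K} \<and> card S = m}. f (card S))"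
    unfolding U
    by (rule sum.UNION_disjoint) (auto intro: finite_subset[of _ "Pow {..<K}"])
  also have "\<dots> = (\<Sum>m\<in>{k..K}. real (K choose m) * f m)"
  proof (rule sum.cong[OF refl])
    fix m
    have "(\<Sum>S\<in>{S. S \<subseteq> {..<K} \<and> card S = m}. f (card S)) = (\<Sum>S\<in>{S. S \<subseteq> {..<K} \<and> card S = m}. f m)"
      by (rule sum.cong) auto
    also have "\<dots> = real (card {S. S \<subseteq> {..<K} \<and> card S = m}) * f m" by simp
    also have "card {S. S \<subseteq> {..<K} \<and> card S = m} = K choose m" using n_subsets[of "{..<K}" m] by simp
    finally show "(\<Sum>S\<in>{S. S \<subseteq> {..<K} \<and> card S = m}. f (card S)) = real (K choose m) * f m" .
  qed
  finally show ?thesis by simp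
qed

lemma (in prob_space) count_prob:
  fixes X :: "nat \<Rightarrow> 'a \<Rightarrow> real"
  assumes ind: "indep_vars (\<lambda>_. borel) X {..<K}"
    and A: "A \<in> sets borel"
    and p: "\<And>l. l < K \<Longrightarrow> prob {\<omega> \<in> space M. X l \<omega> \<in> A} = p"
    and k: "k \<le> K" "1 \<le> K"
  shows "prob {\<omega> \<in> space M. k \<le> card {l. l < K \<and> X l \<omega> \<in> A}} = Tsum K k p"
    and "{\<omega> \<in> space M. k \<le> card {l. l < K \<and> X l \<omega> \<in> A}} \<in> events"
proof -
  have meas: "\<And>l. l < K \<Longrightarrow> X l \<in> borel_measurable M"
    using ind unfolding indep_vars_def by auto
  define B where "B S l = (if l \<in> S then A else - A)" for S :: "nat set" and l :: nat
  define E where "E S = (\<Inter>l\<in>{..<K}. X l -` B S l \<inter> space M)" for S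
  have Bs: "B S l \<in> sets borel" for S l using A unfolding B_def by auto
  have Es: "E S \<in> events" for S
    unfolding E_def using meas Bs k by (intro sets.finite_INT measurable_sets) (auto simp: lessThan_empty_iff)
  have memE: "\<omega> \<in> E S \<longleftrightarrow> \<omega> \<in> space M \<and> (\<forall>l<K. (X l \<omega> \<in> A \<longleftrightarrow> l \<in> S))" for \<omega> S
  proof -
    have "\<omega> \<in> E S \<longleftrightarrow> (\<forall>l\<in>{..<K}. \<omega> \<in> X l -` B S l \<inter> space M)"
      unfolding E_def using k by blast
    also have "\<dots> \<longleftrightarrow> \<omega> \<in> space M \<and> (\<forall>l<K. (X l \<omega> \<in> A \<longleftrightarrow> l \<in> S))"
      unfolding B_def using k by (auto simp: Ball_def)
    finally show ?thesis .
  qed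
  have PE: "prob (E S) = p ^ card S * (1 - p) ^ (K - card S)" if S: "S \<subseteq> {..<K}" for S
  proof -
    have "prob (E S) = (\<Prod>l\<in>{..<K}. prob (X l -` B S l \<inter> space M))"
      unfolding E_def using k Bs by (intro indep_varsD_finite[OF ind]) (auto simp: lessThan_empty_iff)
    also have "\<dots> = (\<Prod>l\<in>{..<K}. if l \<in> S then p else 1 - p)"
    proof (rule prod.cong[OF refl])
      fix l assume l: "l \<in> {..<K}"
      have e1: "X l -` A \<inter> space M = {\<omega> \<in> space M. X l \<omega> \<in> A}" by auto
      have e2: "X l -` (- A) \<inter> space M = space M - {\<omega> \<in> space M. X l \<omega> \<in> A}" by auto
      have "{\<omega> \<in> space M. X l \<omega> \<in> A} = X l -` A \<inter> space M" by auto
      then have ev: "{\<omega> \<in> space M. X l \<omega> \<in> A} \<in> events"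
        using measurable_sets[OF meas[of l] A] l by simp
      show "prob (X l -` B S l \<inter> space M) = (if l \<in> S then p else 1 - p)"
        unfolding B_def using p[of l] l e1 e2 prob_compl[OF ev] by auto
    qed
    also have "\<dots> = p ^ card S * (1 - p) ^ (K - card S)"
    proof -
      have "(\<Prod>l\<in>{..<K}. if l \<in> S then p else 1 - p)
          = (\<Prod>l\<in>{..<K} \<inter> {l. l \<in> S}. p) * (\<Prod>l\<in>{..<K} \<inter> - {l. l \<in> S}. 1 - p)"
        by (rule prod.If_cases) simp
      also have "{..<K} \<inter> {l. l \<in> S} = S" using S by auto
      also have "{..<K} \<inter> - {l. l \<in> S} = {..<K} - S" by auto
      also have "(\<Prod>l\<in>{..<K} - S. 1 - p) = (1 - p) ^ (K - card S)"
        using S by (simp add: card_Diff_subset finite_subset)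
      finally show ?thesis by simp
    qed
    finally show ?thesis .
  qed
  have U: "{\<omega> \<in> space M. k \<le> card {l. l < K \<and> X l \<omega> \<in> A}}
        = (\<Union>S\<in>{S. S \<subseteq> {..<K} \<and> k \<le> card S}. E S)"
  proof (rule set_eqI, rule iffI)
    fix \<omega> assume \<omega>: "\<omega> \<in> {\<omega> \<in> space M. k \<le> card {l. l < K \<and> X l \<omega> \<in> A}}"
    let ?S = "{l. l < K \<and> X l \<omega> \<in> A}"
    have "\<omega> \<in> E ?S" using \<omega> unfolding memE by auto
    moreover have "?S \<in> {S. S \<subseteq> {..<K} \<and> k \<le> card S}" using \<omega> by auto
    ultimately show "\<omega> \<in> (\<Union>S\<in>{S. S \<subseteq> {..<K} \<and> k \<le> card S}. E S)" by blast
  next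
    fix \<omega> assume "\<omega> \<in> (\<Union>S\<in>{S. S \<subseteq> {..<K} \<and> k \<le> card S}. E S)"
    then obtain S where S: "S \<subseteq> {..<K}" "k \<le> card S" "\<omega> \<in> E S" by auto
    have "{l. l < K \<and> X l \<omega> \<in> A} = S"
      using S memE by blast
    then show "\<omega> \<in> {\<omega> \<in> space M. k \<le> card {l. l < K \<and> X l \<omega> \<in> A}}"
      using S memE by auto
  qed
  have disj: "disjoint_family_on E {S. S \<subseteq> {..<K} \<and> k \<le> card S}"
  unfolding disjoint_family_on_def proof (intro ballI impI)
    fix S T assume ST: "S \<in> {S. S \<subseteq> {..<K} \<and> k \<le> card S}" "T \<in> {S. S \<subseteq> {..<K} \<and> k \<le> card S}" "S \<noteq> T"
    show "E S \<inter> E T = {}"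
    proof (rule ccontr)
      assume "E S \<inter> E T \<noteq> {}"
      then obtain \<omega> where w: "\<omega> \<in> E S" "\<omega> \<in> E T" by auto
      have "S = {l. l < K \<and> X l \<omega> \<in> A}" using w(1) ST(1) memE by blast
      moreover have "T = {l. l < K \<and> X l \<omega> \<in> A}" using w(2) ST(2) memE by blast
      ultimately show False using ST(3) by simp
    qed
  qed
  have "prob {\<omega> \<in> space M. k \<le> card {l. l < K \<and> X l \<omega> \<in> A}}
      = (\<Sum>S\<in>{S. S \<subseteq> {..<K} \<and> k \<le> card S}. prob (E S))"
    unfolding U using Es disj
    by (intro finite_measure_finite_Union) (auto intro: finite_subset[of _ "Pow {..<K}"])
  also have "\<dots> = (\<Sum>S\<in>{S. S \<subseteq> {..<K} \<and> k \<le> card S}. p ^ card S * (1 - p) ^ (K - card S))"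
    by (rule sum.cong) (auto simp: PE)
  also have "\<dots> = (\<Sum>m=k..K. real (K choose m) * (p ^ m * (1 - p) ^ (K - m)))"
    by (rule sum_subsets_card[OF k(1)])
  also have "\<dots> = Tsum K k p" unfolding Tsum_def by (simp add: mult.assoc)
  finally show "prob {\<omega> \<in> space M. k \<le> card {l. l < K \<and> X l \<omega> \<in> A}} = Tsum K k p" .
  show "{\<omega> \<in> space M. k \<le> card {l. l < K \<and> X l \<omega> \<in> A}} \<in> events"
    unfolding U using Es by (intro sets.finite_UN) (auto intro: finite_subset[of _ "Pow {..<K}"])
qed

lemma cmod_exp_minus_1_sq: "(cmod (exp (\<i> * complex_of_real t) - 1))\<^sup>2 = 4 * (sin (t / 2))\<^sup>2"
proof -
  have "exp (\<i> * complex_of_real t) = Complex (cos t) (sin t)"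
    by (simp add: exp_eq_polar cis.ctr mult.commute)
  then have "(cmod (exp (\<i> * complex_of_real t) - 1))\<^sup>2 = (cos t - 1)\<^sup>2 + (sin t)\<^sup>2"
    by (simp add: cmod_power2)
  also have "\<dots> = 2 - 2 * cos t" by (simp add: power2_diff sin_squared_eq algebra_simps)
  also have "cos t = 1 - 2 * (sin (t / 2))\<^sup>2" using cos_double_sin[of "t/2"] by simp
  finally show ?thesis by simp
qed

lemma geo_fejer:
  assumes M: "M \<ge> 1"
  shows "(cmod (\<Sum>m<M. exp (\<i> * complex_of_real (real m * x))))\<^sup>2 = real M * fejer M x"
proof (cases "sin (x / 2) = 0")
  case True
  then obtain n :: int where n: "x / 2 = real_of_int n * pi" using sin_zero_iff_int2 by auto
  have "exp (\<i> * complex_of_real (real m * x)) = 1" for m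
  proof -
    have "real m * x = 2 * pi * real_of_int (int m * n)" using n by (simp add: field_simps)
    then have eq: "complex_of_real (real m * x) = complex_of_real (2 * pi * real_of_int (int m * n))"
      by (rule arg_cong)
    have "exp (\<i> * complex_of_real (real m * x)) = exp ((2 * of_int (int m * n) * pi) * \<i>)"
      unfolding eq by (simp add: mult_ac)
    also have "\<dots> = 1" by (rule exp_integer_2pi) (simp add: Ints_of_int)
    finally show ?thesis .
  qed
  then show ?thesis using True by (simp add: fejer_def power2_eq_square)
next
  case False
  define w where "w = exp (\<i> * complex_of_real x)"
  have w1: "w \<noteq> 1"
  proof
    assume "w = 1"
    then have "(cmod (w - 1))\<^sup>2 = 0" by simp
    then show False using cmod_exp_minus_1_sq[of x] False unfolding w_def by simp
  qed
  have pw: "exp (\<i> * complex_of_real (real m * x)) = w ^ m" for m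
    unfolding w_def by (simp add: exp_of_nat_mult[symmetric] mult_ac)
  have "(\<Sum>m<M. exp (\<i> * complex_of_real (real m * x))) = (w ^ M - 1) / (w - 1)"
    unfolding pw using w1 by (simp add: geometric_sum)
  then have "(cmod (\<Sum>m<M. exp (\<i> * complex_of_real (real m * x))))\<^sup>2
      = (cmod (w ^ M - 1))\<^sup>2 / (cmod (w - 1))\<^sup>2"
    by (simp add: norm_divide power_divide)
  also have "w ^ M = exp (\<i> * complex_of_real (real M * x))"
    using pw[of M] by simp
  also have "(cmod (exp (\<i> * complex_of_real (real M * x)) - 1))\<^sup>2 = 4 * (sin (real M * x / 2))\<^sup>2"
    by (rule cmod_exp_minus_1_sq)
  also have "(cmod (w - 1))\<^sup>2 = 4 * (sin (x / 2))\<^sup>2" unfolding w_def by (rule cmod_exp_minus_1_sq)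
  finally show ?thesis using False M by (simp add: fejer_def)
qed

lemma fejer_even: "fejer M (- x) = fejer M x"
  unfolding fejer_def by (simp add: power2_eq_square)

lemma fejer_nonneg: "fejer M x \<ge> 0"
  unfolding fejer_def by auto

lemma gain_eq:
  assumes M: "M \<ge> 1"
  shows "gain M \<alpha> \<theta>b r \<theta> z = (cmod z)\<^sup>2 * fejer M (pi * (\<theta>b - \<theta>)) / (1 + r powr \<alpha>)"
proof -
  define s where "s = sqrt (1 + r powr \<alpha>)"
  define q where "q = sqrt (real M)"
  have s0: "s > 0" unfolding s_def by (simp add: add_pos_nonneg)
  have q0: "q > 0" unfolding q_def using M by simp
  have qq: "q * q = real M" unfolding q_def by simp
  have ss: "s * s = 1 + r powr \<alpha>" unfolding s_def by (simp add: add_nonneg_nonneg)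
  let ?x = "pi * (\<theta> - \<theta>b)"
  have trm: "cnj (chan M \<alpha> r \<theta> z m) * steer M \<theta>b m
      = cnj z / complex_of_real (q * s) * exp (\<i> * complex_of_real (real m * ?x))" for m
  proof -
    have e: "cnj (exp (- \<i> * complex_of_real (pi * real m * \<theta>))) * exp (- \<i> * complex_of_real (pi * real m * \<theta>b))
        = exp (\<i> * complex_of_real (real m * ?x))"
      by (simp add: exp_cnj exp_add[symmetric] algebra_simps)
    show ?thesis
      unfolding chan_def steer_def s_def[symmetric] q_def[symmetric]
      using q0 s0 e[symmetric] by (simp add: field_simps)
  qed
  have "herm M (chan M \<alpha> r \<theta> z) (steer M \<theta>b)
      = cnj z / complex_of_real (q * s) * (\<Sum>m<M. exp (\<i> * complex_of_real (real m * ?x)))"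
    unfolding herm_def trm by (simp add: sum_distrib_left)
  then have "gain M \<alpha> \<theta>b r \<theta> z = (cmod z)\<^sup>2 / (q * s)\<^sup>2 * (real M * fejer M ?x)"
    unfolding gain_def using q0 s0 geo_fejer[OF M, of ?x]
    by (simp add: norm_mult norm_divide power_mult_distrib power_divide)
  also have "fejer M ?x = fejer M (pi * (\<theta>b - \<theta>))"
    using fejer_even[of M "pi * (\<theta>b - \<theta>)"] by (simp add: algebra_simps)
  also have "(q * s)\<^sup>2 = real M * (1 + r powr \<alpha>)"
    unfolding power2_eq_square using qq ss by (simp add: algebra_simps)
  finally have g: "gain M \<alpha> \<theta>b r \<theta> z = (cmod z)\<^sup>2 / (real M * (1 + r powr \<alpha>)) * (real M * fejer M (pi * (\<theta>b - \<theta>)))" .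
  have p: "1 + r powr \<alpha> > 0" by (simp add: add_pos_nonneg)
  have m: "real M > 0" using M by simp
  have aux: "a / (mm * pp) * (mm * f) = a * f / pp" if "mm \<noteq> 0" for a mm pp f :: real
    using that by (simp add: field_simps)
  show ?thesis unfolding g using aux m by simp
qed

lemma lower_gamma_2: assumes "x > 0" shows "lower_gamma 2 x = 1 - (1 + x) * exp (- x)"
proof -
  have "lower_gamma 2 x = (LBINT t=0..x. t * exp (- t))"
    unfolding lower_gamma_def
    by (rule interval_integral_cong) (use assms in \<open>auto simp: einterval_def\<close>)
  also have "\<dots> = (LBINT t=ereal 0..ereal x. t * exp (- t))" by (simp add: zero_ereal_def)
  also have "\<dots> = (- (1 + x) * exp (- x)) - (- (1 + 0) * exp (- 0))"
  proof (rule interval_integral_FTC_finite)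
    show "continuous_on {min 0 x..max 0 x} (\<lambda>t. t * exp (- t))"
      by (intro continuous_intros)
    fix t
    have "((\<lambda>t. - (1 + t) * exp (- t)) has_real_derivative t * exp (- t)) (at t)"
      by (auto intro!: derivative_eq_intros simp: algebra_simps)
    then show "((\<lambda>t. - (1 + t) * exp (- t)) has_vector_derivative t * exp (- t)) (at t within {min 0 x..max 0 x})"
      unfolding has_real_derivative_iff_has_vector_derivative by (rule has_vector_derivative_at_within)
  qed
  finally show ?thesis by (simp add: algebra_simps)
qed

lemma lower_gamma_2_pos: assumes "x > 0" shows "lower_gamma 2 x > 0"
proof -
  have "1 + x + x\<^sup>2 / 2 \<le> exp x" using exp_lower_Taylor_quadratic assms by simp
  moreover have "x\<^sup>2 / 2 > 0" using assms by simp
  ultimately have "1 + x < exp x" by linarith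
  then have "(1 + x) * exp (- x) < 1"
    by (simp add: exp_minus field_simps)
  then show ?thesis using lower_gamma_2[OF assms] by simp
qed

lemma ball_sq: assumes "u \<ge> 0" shows "{z::complex. (cmod z)\<^sup>2 \<le> u} = cball 0 (sqrt u)"
proof -
  have "(cmod z)\<^sup>2 \<le> u \<longleftrightarrow> cmod z \<le> sqrt u" for z :: complex
    using real_sqrt_le_iff[of "(cmod z)\<^sup>2" u] by simp
  then show ?thesis by (intro set_eqI) (simp only: mem_Collect_eq mem_cball_0)
qed

lemma emeasure_disk: assumes "u \<ge> 0" shows "emeasure lborel {z::complex. (cmod z)\<^sup>2 \<le> u} = ennreal (pi * u)"
  unfolding ball_sq[OF assms] using emeasure_cball[of "sqrt u" "0::complex"] assms
  by (simp add: unit_ball_vol_2)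

lemma layer:
  assumes "s \<ge> 0"
  shows "ennreal (exp (- s)) * (if s \<le> t then 1 else 0)
      = ennreal (exp (- t)) * (if s \<le> t then 1 else 0)
        + (\<integral>\<^sup>+u. ennreal (exp (- u)) * (if s \<le> u \<and> u \<le> t then 1 else 0) \<partial>lborel)"
proof (cases "s \<le> t")
  case True
  have "(\<integral>\<^sup>+u. ennreal (exp (- u)) * (if s \<le> u \<and> u \<le> t then 1 else 0) \<partial>lborel)
      = (\<integral>\<^sup>+u\<in>{s..t}. ennreal (exp (- u)) \<partial>lborel)"
    by (intro nn_integral_cong) (auto simp: indicator_def)
  also have "\<dots> = ennreal ((- exp (- t)) - (- exp (- s)))"
    by (rule nn_integral_FTC_Icc) (auto intro!: derivative_eq_intros True)
  finally show ?thesis using True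
    by (simp add: ennreal_plus[symmetric] del: ennreal_plus)
next
  case False
  have "(\<integral>\<^sup>+u. ennreal (exp (- u)) * (if s \<le> u \<and> u \<le> t then 1 else 0) \<partial>lborel) = 0"
    using False by (intro nn_integral_zero') auto
  then show ?thesis using False by simp
qed

lemma pair_sf: "pair_sigma_finite (lborel :: 'a::euclidean_space measure) (lborel :: 'b::euclidean_space measure)"
  by (intro pair_sigma_finite.intro lborel.sigma_finite_measure_axioms)

lemma disk_int:
  assumes t: "t \<ge> 0"
  shows "(\<integral>\<^sup>+z. ennreal (exp (- (cmod z)\<^sup>2)) * (if (cmod z)\<^sup>2 \<le> t then 1 else 0) \<partial>(lborel::complex measure))
      = ennreal (pi * (1 - exp (- t)))"
proof -
  let ?F = "\<lambda>u z. ennreal (exp (- u)) * (if (cmod z)\<^sup>2 \<le> u \<and> u \<le> t then 1 else 0 :: ennreal)"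
  have "(\<integral>\<^sup>+z. ennreal (exp (- (cmod z)\<^sup>2)) * (if (cmod z)\<^sup>2 \<le> t then 1 else 0) \<partial>(lborel::complex measure))
      = (\<integral>\<^sup>+z. ennreal (exp (- t)) * (if (cmod z)\<^sup>2 \<le> t then 1 else 0) + (\<integral>\<^sup>+u. ?F u z \<partial>lborel) \<partial>lborel)"
    by (intro nn_integral_cong layer) simp
  also have "\<dots> = (\<integral>\<^sup>+z. ennreal (exp (- t)) * (if (cmod z)\<^sup>2 \<le> t then 1 else 0) \<partial>lborel)
      + (\<integral>\<^sup>+z. (\<integral>\<^sup>+u. ?F u z \<partial>lborel) \<partial>lborel)"
  proof (rule nn_integral_add)
    show "(\<lambda>z. ennreal (exp (- t)) * (if (cmod z)\<^sup>2 \<le> t then 1 else 0)) \<in> borel_measurable (lborel::complex measure)"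
      by measurable
    show "(\<lambda>z::complex. \<integral>\<^sup>+u. ?F u z \<partial>lborel) \<in> borel_measurable lborel"
    proof -
      have "(\<lambda>(z,u). ?F u z) \<in> borel_measurable ((lborel::complex measure) \<Otimes>\<^sub>M (lborel::real measure))"
        by measurable
      from lborel.borel_measurable_nn_integral_fst[OF this] show ?thesis by simp
    qed
  qed
  also have "(\<integral>\<^sup>+z. ennreal (exp (- t)) * (if (cmod z)\<^sup>2 \<le> t then 1 else 0) \<partial>(lborel::complex measure))
      = ennreal (exp (- t)) * emeasure lborel {z::complex. (cmod z)\<^sup>2 \<le> t}"
  proof -
    have "(\<integral>\<^sup>+z. ennreal (exp (- t)) * (if (cmod z)\<^sup>2 \<le> t then 1 else 0) \<partial>(lborel::complex measure))
        = (\<integral>\<^sup>+z. ennreal (exp (- t)) * indicator {z::complex. (cmod z)\<^sup>2 \<le> t} z \<partial>lborel)"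
      by (intro nn_integral_cong) (simp add: indicator_def)
    also have "\<dots> = ennreal (exp (- t)) * emeasure lborel {z::complex. (cmod z)\<^sup>2 \<le> t}"
      by (rule nn_integral_cmult_indicator) measurable
    finally show ?thesis .
  qed
  also have "emeasure lborel {z::complex. (cmod z)\<^sup>2 \<le> t} = ennreal (pi * t)"
    by (rule emeasure_disk[OF t])
  also have "(\<integral>\<^sup>+z. (\<integral>\<^sup>+u. ?F u z \<partial>lborel) \<partial>(lborel::complex measure))
      = (\<integral>\<^sup>+u. (\<integral>\<^sup>+z. ?F u z \<partial>(lborel::complex measure)) \<partial>lborel)"
    by (rule pair_sigma_finite.Fubini'[OF pair_sf]) measurable
  also have "\<dots> = (\<integral>\<^sup>+u. ennreal pi * (ennreal (u ^ 1 * exp (- u)) * indicator {0..t} u) \<partial>lborel)"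
  proof (rule nn_integral_cong)
    fix u :: real
    show "(\<integral>\<^sup>+z. ?F u z \<partial>(lborel::complex measure)) = ennreal pi * (ennreal (u ^ 1 * exp (- u)) * indicator {0..t} u)"
    proof (cases "0 \<le> u \<and> u \<le> t")
      case True
      have "(\<integral>\<^sup>+z. ?F u z \<partial>(lborel::complex measure))
          = (\<integral>\<^sup>+z. ennreal (exp (- u)) * indicator {z::complex. (cmod z)\<^sup>2 \<le> u} z \<partial>lborel)"
        using True by (intro nn_integral_cong) (simp add: indicator_def)
      also have "\<dots> = ennreal (exp (- u)) * emeasure lborel {z::complex. (cmod z)\<^sup>2 \<le> u}"
        by (rule nn_integral_cmult_indicator) measurable
      also have "\<dots> = ennreal (exp (- u)) * ennreal (pi * u)" using emeasure_disk True by simp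
      finally show ?thesis using True by (simp add: ennreal_mult'[symmetric] mult_ac)
    next
      case False
      have "(\<integral>\<^sup>+z. ?F u z \<partial>(lborel::complex measure)) = (\<integral>\<^sup>+z. 0 \<partial>(lborel::complex measure))"
      proof (rule nn_integral_cong)
        fix z :: complex
        have "\<not> ((cmod z)\<^sup>2 \<le> u \<and> u \<le> t)"
          using False by (smt (verit) zero_le_power2)
        then show "?F u z = 0" by simp
      qed
      then show ?thesis using False by simp
    qed
  qed
  also have "\<dots> = ennreal pi * (\<integral>\<^sup>+u. ennreal (u ^ 1 * exp (- u)) * indicator {0..t} u \<partial>lborel)"
    by (rule nn_integral_cmult) measurable
  also have "(\<integral>\<^sup>+u. ennreal (u ^ 1 * exp (- u)) * indicator {0..t} u \<partial>lborel)
      = (1 - (\<Sum>n\<le>1. (t^n * exp (-t)) / fact n)) * fact 1"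
    by (rule nn_intergal_power_times_exp_Icc[OF t])
  also have "(1 - (\<Sum>n\<le>1. (t^n * exp (-t)) / fact n)) * fact 1 = 1 - exp (- t) - t * exp (- t)"
    by simp
  finally have eq: "(\<integral>\<^sup>+z. ennreal (exp (- (cmod z)\<^sup>2)) * (if (cmod z)\<^sup>2 \<le> t then 1 else 0) \<partial>(lborel::complex measure))
      = ennreal (exp (- t)) * ennreal (pi * t) + ennreal pi * ennreal (1 - exp (- t) - t * exp (- t))" .
  have nn: "0 \<le> 1 - exp (- t) - t * exp (- t)"
  proof -
    have "1 + t \<le> exp t" by simp
    then have "(1 + t) * exp (- t) \<le> 1" by (simp add: exp_minus field_simps)
    then show ?thesis by (simp add: algebra_simps)
  qed
  have "ennreal (exp (- t)) * ennreal (pi * t) + ennreal pi * ennreal (1 - exp (- t) - t * exp (- t))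
      = ennreal (exp (- t) * (pi * t) + pi * (1 - exp (- t) - t * exp (- t)))"
    using nn t by (simp add: ennreal_mult'[symmetric] ennreal_plus[symmetric] del: ennreal_plus)
  also have "exp (- t) * (pi * t) + pi * (1 - exp (- t) - t * exp (- t)) = pi * (1 - exp (- t))"
    by (simp add: algebra_simps)
  finally show ?thesis using eq by simp
qed

lemma disk_int_strict:
  assumes t: "t \<ge> 0"
  shows "(\<integral>\<^sup>+z. ennreal (exp (- (cmod z)\<^sup>2)) * (if (cmod z)\<^sup>2 < t then 1 else 0) \<partial>(lborel::complex measure))
      = ennreal (pi * (1 - exp (- t)))"
proof -
  have null: "sphere (0::complex) (sqrt t) \<in> null_sets lborel"
    using negligible_sphere[of "0::complex" "sqrt t"]
    by (auto simp: null_sets_completion_iff negligible_iff_null_sets negligible_convex_frontier)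
  have "AE z in (lborel::complex measure). z \<notin> sphere 0 (sqrt t)"
    by (rule AE_not_in[OF null])
  then have "AE z in (lborel::complex measure). ennreal (exp (- (cmod z)\<^sup>2)) * (if (cmod z)\<^sup>2 < t then 1 else 0)
      = ennreal (exp (- (cmod z)\<^sup>2)) * (if (cmod z)\<^sup>2 \<le> t then 1 else 0)"
  proof (rule AE_mp, intro AE_I2 impI)
    fix z :: complex assume z: "z \<notin> sphere 0 (sqrt t)"
    have "(cmod z)\<^sup>2 \<noteq> t"
    proof
      assume "(cmod z)\<^sup>2 = t"
      then have "cmod z = sqrt t" by (metis norm_ge_zero real_sqrt_abs abs_of_nonneg)
      then show False using z by simp
    qed
    then show "ennreal (exp (- (cmod z)\<^sup>2)) * (if (cmod z)\<^sup>2 < t then 1 else 0)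
      = ennreal (exp (- (cmod z)\<^sup>2)) * (if (cmod z)\<^sup>2 \<le> t then 1 else 0)" by auto
  qed
  then have "(\<integral>\<^sup>+z. ennreal (exp (- (cmod z)\<^sup>2)) * (if (cmod z)\<^sup>2 < t then 1 else 0) \<partial>(lborel::complex measure))
      = (\<integral>\<^sup>+z. ennreal (exp (- (cmod z)\<^sup>2)) * (if (cmod z)\<^sup>2 \<le> t then 1 else 0) \<partial>(lborel::complex measure))"
    by (rule nn_integral_cong_AE)
  then show ?thesis using disk_int[OF t] by simp
qed

lemma Qint:
  assumes c: "c > 0" and y: "y \<ge> 0"
  shows "(\<integral>\<^sup>+z. ennreal (exp (- (cmod z)\<^sup>2) / pi) * (if (cmod z)\<^sup>2 * c \<le> y then 1 else 0) \<partial>(lborel::complex measure))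
      = ennreal (1 - exp (- (y / c)))"
    and "(\<integral>\<^sup>+z. ennreal (exp (- (cmod z)\<^sup>2) / pi) * (if (cmod z)\<^sup>2 * c < y then 1 else 0) \<partial>(lborel::complex measure))
      = ennreal (1 - exp (- (y / c)))"
proof -
  have t: "y / c \<ge> 0" using c y by simp
  have e1: "(cmod z)\<^sup>2 * c \<le> y \<longleftrightarrow> (cmod z)\<^sup>2 \<le> y / c" for z using c by (simp add: field_simps)
  have e2: "(cmod z)\<^sup>2 * c < y \<longleftrightarrow> (cmod z)\<^sup>2 < y / c" for z using c by (simp add: field_simps)
  have sp: "ennreal (exp (- (cmod z)\<^sup>2) / pi) = ennreal (exp (- (cmod z)\<^sup>2)) * ennreal (1 / pi)" for z :: complex
    by (simp add: ennreal_mult'[symmetric])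
  have fin: "ennreal (pi * (1 - exp (- (y / c)))) * ennreal (1 / pi) = ennreal (1 - exp (- (y / c)))"
  proof -
    have "0 \<le> 1 - exp (- (y / c))" using t by simp
    then have "ennreal (pi * (1 - exp (- (y / c)))) * ennreal (1 / pi) = ennreal (pi * (1 - exp (- (y / c))) * (1 / pi))"
      by (simp add: ennreal_mult'[symmetric])
    then show ?thesis by simp
  qed
  have "(\<integral>\<^sup>+z. ennreal (exp (- (cmod z)\<^sup>2) / pi) * (if (cmod z)\<^sup>2 * c \<le> y then 1 else 0) \<partial>(lborel::complex measure))
      = (\<integral>\<^sup>+z. ennreal (exp (- (cmod z)\<^sup>2)) * (if (cmod z)\<^sup>2 \<le> y / c then 1 else 0) * ennreal (1 / pi) \<partial>(lborel::complex measure))"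
    unfolding e1 sp by (simp add: mult_ac)
  also have "\<dots> = (\<integral>\<^sup>+z. ennreal (exp (- (cmod z)\<^sup>2)) * (if (cmod z)\<^sup>2 \<le> y / c then 1 else 0) \<partial>(lborel::complex measure)) * ennreal (1 / pi)"
    by (rule nn_integral_multc) measurable
  finally show "(\<integral>\<^sup>+z. ennreal (exp (- (cmod z)\<^sup>2) / pi) * (if (cmod z)\<^sup>2 * c \<le> y then 1 else 0) \<partial>(lborel::complex measure))
      = ennreal (1 - exp (- (y / c)))" unfolding disk_int[OF t] fin .
  have "(\<integral>\<^sup>+z. ennreal (exp (- (cmod z)\<^sup>2) / pi) * (if (cmod z)\<^sup>2 * c < y then 1 else 0) \<partial>(lborel::complex measure))
      = (\<integral>\<^sup>+z. ennreal (exp (- (cmod z)\<^sup>2)) * (if (cmod z)\<^sup>2 < y / c then 1 else 0) * ennreal (1 / pi) \<partial>(lborel::complex measure))"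
    unfolding e2 sp by (simp add: mult_ac)
  also have "\<dots> = (\<integral>\<^sup>+z. ennreal (exp (- (cmod z)\<^sup>2)) * (if (cmod z)\<^sup>2 < y / c then 1 else 0) \<partial>(lborel::complex measure)) * ennreal (1 / pi)"
    by (rule nn_integral_multc) measurable
  finally show "(\<integral>\<^sup>+z. ennreal (exp (- (cmod z)\<^sup>2) / pi) * (if (cmod z)\<^sup>2 * c < y then 1 else 0) \<partial>(lborel::complex measure))
      = ennreal (1 - exp (- (y / c)))" unfolding disk_int_strict[OF t] fin .
qed

lemma nn_LBINT:
  fixes f :: "real \<Rightarrow> real"
  assumes ab: "a \<le> b" and fm: "f \<in> borel_measurable borel"
    and nn: "\<And>x. x \<in> {a..b} \<Longrightarrow> 0 \<le> f x"
    and fin: "(\<integral>\<^sup>+x. ennreal (indicator {a..b} x * f x) \<partial>lborel) \<noteq> \<infinity>"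
  shows "(\<integral>\<^sup>+x. ennreal (indicator {a..b} x * f x) \<partial>lborel) = ennreal (LBINT x=a..b. f x)"
    and "0 \<le> (LBINT x=a..b. f x)"
proof -
  define v where "v = (\<integral>\<^sup>+x. ennreal (indicator {a..b} x * f x) \<partial>lborel)"
  define x0 where "x0 = enn2real v"
  have v: "v = ennreal x0" unfolding x0_def using fin unfolding v_def
    by (simp add: ennreal_enn2real_if)
  have x0: "0 \<le> x0" unfolding x0_def by simp
  have hb: "has_bochner_integral lborel (\<lambda>x. indicator {a..b} x * f x) x0"
  proof (rule has_bochner_integral_nn_integral)
    show "(\<lambda>x. indicator {a..b} x * f x) \<in> borel_measurable lborel" using fm by measurable
    show "AE x in lborel. 0 \<le> indicator {a..b} x * f x"
      using nn by (intro AE_I2) (auto simp: indicator_def)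
    show "0 \<le> x0" by (rule x0)
    show "(\<integral>\<^sup>+x. ennreal (indicator {a..b} x * f x) \<partial>lborel) = ennreal x0" using v unfolding v_def .
  qed
  have "(LBINT x=a..b. f x) = integral\<^sup>L lborel (\<lambda>x. indicator {a..b} x * f x)"
    using ab by (simp add: interval_integral_Icc set_lebesgue_integral_def)
  also have "\<dots> = x0" using hb by (rule has_bochner_integral_integral_eq)
  finally have L: "(LBINT x=a..b. f x) = x0" .
  show "(\<integral>\<^sup>+x. ennreal (indicator {a..b} x * f x) \<partial>lborel) = ennreal (LBINT x=a..b. f x)"
    using v unfolding v_def L .
  show "0 \<le> (LBINT x=a..b. f x)" using L x0 by simp
qed

lemma fejer_measurable[measurable]: "fejer M \<in> borel_measurable borel"
  unfolding fejer_def by measurable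

lemma fejer_zero_countable:
  assumes M: "M \<ge> 1"
  shows "countable {\<theta>::real. fejer M (pi * (\<theta>b - \<theta>)) = 0}"
proof -
  have "{\<theta>::real. fejer M (pi * (\<theta>b - \<theta>)) = 0} \<subseteq> range (\<lambda>n::int. \<theta>b - 2 * of_int n / real M)"
  proof
    fix \<theta> :: real assume "\<theta> \<in> {\<theta>. fejer M (pi * (\<theta>b - \<theta>)) = 0}"
    then have f0: "fejer M (pi * (\<theta>b - \<theta>)) = 0" by simp
    have "sin (real M * (pi * (\<theta>b - \<theta>)) / 2) = 0"
      using f0 M unfolding fejer_def by (auto split: if_splits)
    then obtain n :: int where n: "real M * (pi * (\<theta>b - \<theta>)) / 2 = of_int n * pi"
      using sin_zero_iff_int2 by auto
    have "pi * (real M * (\<theta>b - \<theta>)) = pi * (2 * of_int n)" using n by (simp add: field_simps)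
    then have "real M * (\<theta>b - \<theta>) = 2 * of_int n" by simp
    then show "\<theta> \<in> range (\<lambda>n::int. \<theta>b - 2 * of_int n / real M)" 
      using M by (intro range_eqI[of _ _ n]) (simp add: field_simps)
  qed
  then show ?thesis by (rule countable_subset) simp
qed

definition kF :: "nat \<Rightarrow> real \<Rightarrow> real \<Rightarrow> real \<Rightarrow> real \<Rightarrow> real \<Rightarrow> real \<Rightarrow> real \<Rightarrow> real \<Rightarrow> real" where
  "kF M \<alpha> \<phi> RD \<Delta> \<theta>b y \<theta> r =
     (1 - exp (- (y * (1 + r powr \<alpha>)) / fejer M (pi * (\<theta>b - \<theta>))))
        * (\<phi>\<^sup>2 * exp (- \<phi> * r) / (2 * \<Delta> * lower_gamma 2 (RD * \<phi>))) * r"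

lemma Fpi_kF: "Fpi M \<alpha> \<phi> RD \<Delta> \<theta>b y = (LBINT \<theta>=\<theta>b-\<Delta>..\<theta>b+\<Delta>. (LBINT r=0..RD. kF M \<alpha> \<phi> RD \<Delta> \<theta>b y \<theta> r))"
  unfolding Fpi_def kF_def ..

lemma kF_measurable[measurable]: "(\<lambda>(\<theta>, r). kF M \<alpha> \<phi> RD \<Delta> \<theta>b y \<theta> r) \<in> borel_measurable (lborel \<Otimes>\<^sub>M lborel)"
  unfolding kF_def by measurable

lemma kF_bounds:
  assumes "y \<ge> 0" "\<phi> > 0" "\<Delta> > 0" "RD > 0" "0 \<le> r" "r \<le> RD"
  shows "0 \<le> kF M \<alpha> \<phi> RD \<Delta> \<theta>b y \<theta> r"
    and "kF M \<alpha> \<phi> RD \<Delta> \<theta>b y \<theta> r \<le> \<phi>\<^sup>2 / (2 * \<Delta> * lower_gamma 2 (RD * \<phi>)) * RD"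
proof -
  let ?g = "lower_gamma 2 (RD * \<phi>)"
  have g: "?g > 0" using assms by (intro lower_gamma_2_pos) simp
  have "- (y * (1 + r powr \<alpha>)) / fejer M (pi * (\<theta>b - \<theta>)) \<le> 0"
    using assms fejer_nonneg[of M] by (intro divide_nonpos_nonneg) (auto intro: add_nonneg_nonneg)
  then have e1: "0 \<le> 1 - exp (- (y * (1 + r powr \<alpha>)) / fejer M (pi * (\<theta>b - \<theta>)))" by simp
  have e2: "1 - exp (- (y * (1 + r powr \<alpha>)) / fejer M (pi * (\<theta>b - \<theta>))) \<le> 1" by simp
  have d1: "0 \<le> \<phi>\<^sup>2 * exp (- \<phi> * r) / (2 * \<Delta> * ?g)" using g assms by simp
  have "exp (- \<phi> * r) \<le> 1" using assms by simp
  then have d2: "\<phi>\<^sup>2 * exp (- \<phi> * r) / (2 * \<Delta> * ?g) \<le> \<phi>\<^sup>2 / (2 * \<Delta> * ?g)"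
    using g assms by (intro divide_right_mono) (auto intro: mult_left_le)
  show "0 \<le> kF M \<alpha> \<phi> RD \<Delta> \<theta>b y \<theta> r" unfolding kF_def using e1 d1 assms by (intro mult_nonneg_nonneg) auto
  have "(1 - exp (- (y * (1 + r powr \<alpha>)) / fejer M (pi * (\<theta>b - \<theta>)))) * (\<phi>\<^sup>2 * exp (- \<phi> * r) / (2 * \<Delta> * ?g))
      \<le> 1 * (\<phi>\<^sup>2 / (2 * \<Delta> * ?g))"
    using e1 e2 d1 d2 by (intro mult_mono) auto
  then show "kF M \<alpha> \<phi> RD \<Delta> \<theta>b y \<theta> r \<le> \<phi>\<^sup>2 / (2 * \<Delta> * ?g) * RD"
    unfolding kF_def using assms e1 d1 g by (intro mult_mono) auto
qed

lemma inner_LBINT: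
  assumes "y \<ge> 0" "\<phi> > 0" "\<Delta> > 0" "RD > 0"
  shows "(\<integral>\<^sup>+r. ennreal (indicator {0..RD} r * kF M \<alpha> \<phi> RD \<Delta> \<theta>b y \<theta> r) \<partial>lborel)
      = ennreal (LBINT r=0..RD. kF M \<alpha> \<phi> RD \<Delta> \<theta>b y \<theta> r)"
    and "0 \<le> (LBINT r=0..RD. kF M \<alpha> \<phi> RD \<Delta> \<theta>b y \<theta> r)"
proof -
  let ?C = "\<phi>\<^sup>2 / (2 * \<Delta> * lower_gamma 2 (RD * \<phi>)) * RD"
  have m: "(\<lambda>r. kF M \<alpha> \<phi> RD \<Delta> \<theta>b y \<theta> r) \<in> borel_measurable borel"
    unfolding kF_def by measurable
  have "(\<integral>\<^sup>+r. ennreal (indicator {0..RD} r * kF M \<alpha> \<phi> RD \<Delta> \<theta>b y \<theta> r) \<partial>lborel)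
      \<le> (\<integral>\<^sup>+r. ennreal ?C * indicator {0..RD} r \<partial>lborel)"
    using kF_bounds(2)[OF assms] by (intro nn_integral_mono) (auto simp: indicator_def intro: ennreal_leI)
  also have "\<dots> = ennreal ?C * emeasure lborel {0..RD}" by (rule nn_integral_cmult_indicator) simp
  also have "\<dots> < \<infinity>" using assms by (simp add: ennreal_mult_less_top)
  finally have fin: "(\<integral>\<^sup>+r. ennreal (indicator {0..RD} r * kF M \<alpha> \<phi> RD \<Delta> \<theta>b y \<theta> r) \<partial>lborel) \<noteq> \<infinity>"
    by simp
  show "(\<integral>\<^sup>+r. ennreal (indicator {0..RD} r * kF M \<alpha> \<phi> RD \<Delta> \<theta>b y \<theta> r) \<partial>lborel)
      = ennreal (LBINT r=0..RD. kF M \<alpha> \<phi> RD \<Delta> \<theta>b y \<theta> r)"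
    unfolding zero_ereal_def using assms kF_bounds(1)[OF assms] by (intro nn_LBINT(1)[OF _ m _ fin]) auto
  show "0 \<le> (LBINT r=0..RD. kF M \<alpha> \<phi> RD \<Delta> \<theta>b y \<theta> r)"
    unfolding zero_ereal_def using assms kF_bounds(1)[OF assms] by (intro nn_LBINT(2)[OF _ m _ fin]) auto
qed

lemma Qint_rel:
  assumes "rel = (\<le>) \<or> rel = (<)" "c > 0" "y \<ge> 0"
  shows "(\<integral>\<^sup>+z. ennreal (exp (- (cmod z)\<^sup>2) / pi) * (if rel ((cmod z)\<^sup>2 * c) y then 1 else 0) \<partial>(lborel::complex measure))
      = ennreal (1 - exp (- (y / c)))"
  using assms Qint[OF assms(2,3)] by auto

lemma gain_cdf:
  fixes V :: "'w \<Rightarrow> real \<times> real \<times> complex" and rel :: "real \<Rightarrow> real \<Rightarrow> bool"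
  assumes P: "prob_space \<Omega>"
    and dist: "distributed \<Omega> (lborel \<Otimes>\<^sub>M lborel \<Otimes>\<^sub>M lborel) V (user_density \<phi> RD \<Delta> \<theta>b)"
    and M: "M \<ge> 1" and \<phi>: "\<phi> > 0" and RD: "RD > 0" and \<Delta>: "\<Delta> > 0" and y: "y > 0"
    and rel: "rel = (\<le>) \<or> rel = (<)"
  shows "measure \<Omega> {\<omega> \<in> space \<Omega>. rel (gain M \<alpha> \<theta>b (fst (V \<omega>)) (fst (snd (V \<omega>))) (snd (snd (V \<omega>)))) y}
       = Fpi M \<alpha> \<phi> RD \<Delta> \<theta>b y"
proof -
  let ?N = "lborel \<Otimes>\<^sub>M lborel \<Otimes>\<^sub>M (lborel :: complex measure) :: (real \<times> real \<times> complex) measure"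
  define g where "g v = gain M \<alpha> \<theta>b (fst v) (fst (snd v)) (snd (snd v))" for v :: "real \<times> real \<times> complex"
  define c where "c r \<theta> = fejer M (pi * (\<theta>b - \<theta>)) / (1 + r powr \<alpha>)" for r \<theta> :: real
  define f where "f = user_density \<phi> RD \<Delta> \<theta>b"
  define \<gamma> where "\<gamma> = lower_gamma 2 (RD * \<phi>)"
  define dens where "dens r = \<phi>\<^sup>2 * exp (- \<phi> * r) * r / (2 * \<Delta> * \<gamma>)" for r :: real
  define I where "I = {\<theta>b-\<Delta>..\<theta>b+\<Delta>}"
  define J where "J \<theta> = (LBINT r=0..RD. kF M \<alpha> \<phi> RD \<Delta> \<theta>b y \<theta> r)" for \<theta>
  have \<gamma>: "\<gamma> > 0" unfolding \<gamma>_def using RD \<phi> by (intro lower_gamma_2_pos) simp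
  have g_eq: "g (r, \<theta>, z) = (cmod z)\<^sup>2 * c r \<theta>" for r \<theta> z
    unfolding g_def c_def using gain_eq[OF M] by simp
  have gm[measurable]: "g \<in> borel_measurable ?N"
  proof -
    have "g = (\<lambda>v. (cmod (snd (snd v)))\<^sup>2 * fejer M (pi * (\<theta>b - fst (snd v))) / (1 + fst v powr \<alpha>))"
      unfolding g_def using gain_eq[OF M] by (intro ext) simp
    also have "\<dots> \<in> borel_measurable ?N" by measurable
    finally show ?thesis .
  qed
  define A where "A = {v. rel (g v) y}"
  have le: "{v \<in> space ?N. g v \<le> y} \<in> sets ?N" by measurable
  have lt: "{v \<in> space ?N. g v < y} \<in> sets ?N" by measurable
  have Am: "A \<in> sets ?N"
  proof -
    have "A = {v \<in> space ?N. rel (g v) y}" unfolding A_def by (simp add: space_pair_measure)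
    then show ?thesis using rel le lt by auto
  qed
  have fm[measurable]: "f \<in> borel_measurable ?N"
    unfolding f_def user_density_def by measurable
  define H where "H v = f v * indicator A v" for v
  have Hm[measurable]: "H \<in> borel_measurable ?N" unfolding H_def using Am by measurable
  define W where "W r \<theta> = (\<integral>\<^sup>+z. H (r, \<theta>, z) \<partial>lborel)" for r \<theta>
  have ev: "{\<omega> \<in> space \<Omega>. rel (gain M \<alpha> \<theta>b (fst (V \<omega>)) (fst (snd (V \<omega>))) (snd (snd (V \<omega>)))) y}
      = V -` A \<inter> space \<Omega>" unfolding A_def g_def by auto
  have em: "emeasure \<Omega> (V -` A \<inter> space \<Omega>) = (\<integral>\<^sup>+v. H v \<partial>?N)"
    unfolding H_def f_def by (rule distributed_emeasure[OF dist Am])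
  have sf2: "sigma_finite_measure ((lborel::real measure) \<Otimes>\<^sub>M (lborel::complex measure))"
    by (intro sigma_finite_pair_measure lborel.sigma_finite_measure_axioms)
  have step1: "(\<integral>\<^sup>+v. H v \<partial>?N) = (\<integral>\<^sup>+r. (\<integral>\<^sup>+\<theta>. W r \<theta> \<partial>lborel) \<partial>lborel)"
  proof -
    have "(\<integral>\<^sup>+v. H v \<partial>?N) = (\<integral>\<^sup>+x. (\<integral>\<^sup>+y. H (x, y) \<partial>(lborel \<Otimes>\<^sub>M lborel)) \<partial>lborel)"
      by (rule sigma_finite_measure.nn_integral_fst[OF sf2, symmetric]) measurable
    also have "\<dots> = (\<integral>\<^sup>+r. (\<integral>\<^sup>+\<theta>. W r \<theta> \<partial>lborel) \<partial>lborel)"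
    proof (rule nn_integral_cong)
      fix x :: real
      have "(\<lambda>y. H (x, y)) \<in> borel_measurable ((lborel::real measure) \<Otimes>\<^sub>M (lborel::complex measure))"
        by measurable
      from lborel.nn_integral_fst[OF this]
      show "(\<integral>\<^sup>+y. H (x, y) \<partial>(lborel \<Otimes>\<^sub>M lborel)) = (\<integral>\<^sup>+\<theta>. W x \<theta> \<partial>lborel)"
        unfolding W_def by simp
    qed
    finally show ?thesis .
  qed
  have step2: "(\<integral>\<^sup>+r. (\<integral>\<^sup>+\<theta>. W r \<theta> \<partial>lborel) \<partial>lborel) = (\<integral>\<^sup>+\<theta>. (\<integral>\<^sup>+r. W r \<theta> \<partial>lborel) \<partial>lborel)"
  proof (rule lborel_pair.Fubini')
    have "(\<lambda>(p, z). H (snd p, fst p, z)) \<in> borel_measurable (((lborel::real measure) \<Otimes>\<^sub>M (lborel::real measure)) \<Otimes>\<^sub>M (lborel::complex measure))"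
      by measurable
    from lborel.borel_measurable_nn_integral_fst[OF this]
    show "(\<lambda>(\<theta>, r). W r \<theta>) \<in> borel_measurable (lborel \<Otimes>\<^sub>M lborel)"
      unfolding W_def by (simp add: case_prod_beta')
  qed
  define Z where "Z = {\<theta>::real. fejer M (pi * (\<theta>b - \<theta>)) = 0}"
  have Wpt: "W r \<theta> = ennreal (indicator I \<theta> * (indicator {0..RD} r * kF M \<alpha> \<phi> RD \<Delta> \<theta>b y \<theta> r))"
    if Z: "\<theta> \<notin> Z" for r \<theta>
  proof (cases "r \<in> {0..RD} \<and> \<theta> \<in> I")
    case True
    have fpos: "fejer M (pi * (\<theta>b - \<theta>)) > 0" using Z fejer_nonneg[of M] unfolding Z_def
      by (simp add: order_less_le)
    have p1: "1 + r powr \<alpha> > 0" by (simp add: add_pos_nonneg)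
    have cpos: "c r \<theta> > 0" unfolding c_def using fpos p1 by simp
    have dnn: "dens r \<ge> 0" unfolding dens_def using True \<gamma> \<Delta> by simp
    have Hpt: "H (r, \<theta>, z) = ennreal (dens r) * (ennreal (exp (- (cmod z)\<^sup>2) / pi) * (if rel ((cmod z)\<^sup>2 * c r \<theta>) y then 1 else 0))"
      for z
    proof -
      have "f (r, \<theta>, z) = ennreal (dens r * (exp (- (cmod z)\<^sup>2) / pi))"
        unfolding f_def user_density_def dens_def \<gamma>_def using True unfolding I_def
        by (simp add: indicator_def mult_ac)
      also have "\<dots> = ennreal (dens r) * ennreal (exp (- (cmod z)\<^sup>2) / pi)"
        using dnn by (intro ennreal_mult) simp_all
      finally show ?thesis unfolding H_def A_def using g_eq by (simp add: indicator_def mult_ac)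
    qed
    have "W r \<theta> = ennreal (dens r) * (\<integral>\<^sup>+z. ennreal (exp (- (cmod z)\<^sup>2) / pi) * (if rel ((cmod z)\<^sup>2 * c r \<theta>) y then 1 else 0) \<partial>lborel)"
      unfolding W_def Hpt by (rule nn_integral_cmult) (use rel in \<open>auto\<close>)
    also have "\<dots> = ennreal (dens r) * ennreal (1 - exp (- (y / c r \<theta>)))"
      using Qint_rel[OF rel cpos] y by simp
    also have "\<dots> = ennreal (dens r * (1 - exp (- (y / c r \<theta>))))"
      using dnn y cpos by (simp add: ennreal_mult)
    also have "dens r * (1 - exp (- (y / c r \<theta>))) = kF M \<alpha> \<phi> RD \<Delta> \<theta>b y \<theta> r"
    proof -
      have "- (y / c r \<theta>) = - (y * (1 + r powr \<alpha>)) / fejer M (pi * (\<theta>b - \<theta>))"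
        unfolding c_def using fpos p1 by (simp add: field_simps)
      then show ?thesis unfolding kF_def dens_def \<gamma>_def by (simp add: field_simps)
    qed
    finally show ?thesis using True by simp
  next
    case False
    have "H (r, \<theta>, z) = 0" for z
      unfolding H_def f_def user_density_def using False unfolding I_def by (auto simp: indicator_def)
    then have "W r \<theta> = 0" unfolding W_def by simp
    then show ?thesis using False by (auto simp: indicator_def)
  qed
  have step3: "AE \<theta> in lborel. (\<integral>\<^sup>+r. W r \<theta> \<partial>lborel) = ennreal (indicator I \<theta> * J \<theta>)"
  proof -
    have "AE \<theta> in lborel. \<theta> \<notin> Z"
      unfolding Z_def by (rule AE_not_in[OF countable_imp_null_set_lborel[OF fejer_zero_countable[OF M]]])
    then show ?thesis
    proof (rule AE_mp, intro AE_I2 impI)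
      fix \<theta> assume Z: "\<theta> \<notin> Z"
      have "(\<integral>\<^sup>+r. W r \<theta> \<partial>lborel) = (\<integral>\<^sup>+r. ennreal (indicator I \<theta> * (indicator {0..RD} r * kF M \<alpha> \<phi> RD \<Delta> \<theta>b y \<theta> r)) \<partial>lborel)"
        using Wpt[OF Z] by simp
      also have "\<dots> = ennreal (indicator I \<theta> * J \<theta>)"
      proof (cases "\<theta> \<in> I")
        case True
        then show ?thesis unfolding J_def using inner_LBINT(1)[of y \<phi> \<Delta> RD] y \<phi> \<Delta> RD by simp
      next
        case False
        then show ?thesis by simp
      qed
      finally show "(\<integral>\<^sup>+r. W r \<theta> \<partial>lborel) = ennreal (indicator I \<theta> * J \<theta>)" .
    qed
  qed
  have chain: "emeasure \<Omega> (V -` A \<inter> space \<Omega>) = (\<integral>\<^sup>+\<theta>. ennreal (indicator I \<theta> * J \<theta>) \<partial>lborel)"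
    unfolding em step1 step2 by (rule nn_integral_cong_AE[OF step3])
  have fin: "(\<integral>\<^sup>+\<theta>. ennreal (indicator I \<theta> * J \<theta>) \<partial>lborel) \<noteq> \<infinity>"
    unfolding chain[symmetric] using prob_space.emeasure_le_1[OF P, of "V -` A \<inter> space \<Omega>"] by (auto simp: top_unique)
  have Jm: "J \<in> borel_measurable borel"
  proof -
    have "J = (\<lambda>\<theta>. integral\<^sup>L lborel (\<lambda>r. indicator {0..RD} r * kF M \<alpha> \<phi> RD \<Delta> \<theta>b y \<theta> r))"
      unfolding J_def zero_ereal_def using RD
      by (intro ext) (simp add: interval_integral_Icc set_lebesgue_integral_def)
    also have "\<dots> \<in> borel_measurable lborel"
    proof (rule lborel.borel_measurable_lebesgue_integral)
      show "(\<lambda>(\<theta>, r). indicator {0..RD} r * kF M \<alpha> \<phi> RD \<Delta> \<theta>b y \<theta> r) \<in> borel_measurable (lborel \<Otimes>\<^sub>M lborel)"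
        unfolding kF_def by measurable
    qed
    finally show ?thesis by simp
  qed
  have Jnn: "0 \<le> J \<theta>" for \<theta> unfolding J_def using inner_LBINT(2)[of y \<phi> \<Delta> RD] y \<phi> \<Delta> RD by simp
  have fin_eq: "(\<integral>\<^sup>+\<theta>. ennreal (indicator I \<theta> * J \<theta>) \<partial>lborel) = ennreal (LBINT \<theta>=\<theta>b-\<Delta>..\<theta>b+\<Delta>. J \<theta>)"
    and nn: "0 \<le> (LBINT \<theta>=\<theta>b-\<Delta>..\<theta>b+\<Delta>. J \<theta>)"
    using nn_LBINT[of "\<theta>b-\<Delta>" "\<theta>b+\<Delta>" J] \<Delta> Jm Jnn fin unfolding I_def by auto
  have Fpi: "Fpi M \<alpha> \<phi> RD \<Delta> \<theta>b y = (LBINT \<theta>=\<theta>b-\<Delta>..\<theta>b+\<Delta>. J \<theta>)"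
    unfolding Fpi_kF J_def ..
  show ?thesis unfolding ev measure_def chain fin_eq Fpi using nn by simp
qed

theorem corollary1:
  fixes \<Omega> :: "'w measure"
    and r \<theta> :: "nat \<Rightarrow> 'w \<Rightarrow> real" and a :: "nat \<Rightarrow> 'w \<Rightarrow> complex"
    and M K i j :: nat
    and G :: "nat \<Rightarrow> 'w \<Rightarrow> real" and F :: "real \<Rightarrow> real"
    and \<alpha> \<phi> RD \<Delta> \<theta>b \<beta>i \<beta>j \<rho> Ri Rj \<epsilon>i \<epsilon>j Poi Poj :: real
  assumes "prob_space \<Omega>"
    and "M \<ge> 1" and "\<alpha> > 0" and "\<phi> > 0" and "RD > 0" and "\<Delta> > 0"
    and "K \<ge> 2" and "1 \<le> i" and "i < j" and "j \<le> K"
    and indep: "prob_space.indep_vars \<Omega> (\<lambda>_. lborel \<Otimes>\<^sub>M lborel \<Otimes>\<^sub>M lborel)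
                   (\<lambda>k \<omega>. (r k \<omega>, \<theta> k \<omega>, a k \<omega>)) {..<K}"
    and distr: "\<And>k. k < K \<Longrightarrow> distributed \<Omega> (lborel \<Otimes>\<^sub>M lborel \<Otimes>\<^sub>M lborel)
                   (\<lambda>\<omega>. (r k \<omega>, \<theta> k \<omega>, a k \<omega>)) (user_density \<phi> RD \<Delta> \<theta>b)"
    and "\<beta>i \<ge> \<beta>j" and "\<beta>j > 0" and "\<beta>i\<^sup>2 + \<beta>j\<^sup>2 = 1"
    and "\<rho> > 0" and "Ri > 0" and "Rj > 0"
    and "\<epsilon>i = 2 powr Ri - 1" and "\<epsilon>j = 2 powr Rj - 1"
    and "G =  (\<lambda>k \<omega>. ord_stat K (\<lambda>l. gain M \<alpha> \<theta>b (r l \<omega>) (\<theta> l \<omega>) (a l \<omega>)) k)"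
    and "Poi = measure \<Omega> {\<omega> \<in> space \<Omega>.
                 G i \<omega> * \<beta>i\<^sup>2 / (G i \<omega> * \<beta>j\<^sup>2 + 1 / \<rho>) < \<epsilon>i}"
    and "Poj = 1 - measure \<Omega> {\<omega> \<in> space \<Omega>.
                 G j \<omega> * \<beta>i\<^sup>2 / (G j \<omega> * \<beta>j\<^sup>2 + 1 / \<rho>) > \<epsilon>i
                 \<and> \<rho> * G j \<omega> * \<beta>j\<^sup>2 > \<epsilon>j}"
    and "F = Fpi M \<alpha> \<phi> RD \<Delta> \<theta>b"
  shows "(\<beta>i\<^sup>2 \<le> \<beta>j\<^sup>2 * \<epsilon>i \<longrightarrow> Poj = 1)
       \<and> (\<beta>i\<^sup>2 > \<beta>j\<^sup>2 * \<epsilon>i \<longrightarrow>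
            Poj = order_cdf_sum K j (F (max ((\<epsilon>i / \<rho>) / (\<beta>i\<^sup>2 - \<beta>j\<^sup>2 * \<epsilon>i)) (\<epsilon>j / (\<rho> * \<beta>j\<^sup>2))))
          \<and> Poi = order_cdf_sum K i (F ((\<epsilon>i / \<rho>) / (\<beta>i\<^sup>2 - \<beta>j\<^sup>2 * \<epsilon>i))))"
proof -
  note P = assms(1)
  interpret prob_space \<Omega> by (rule P)
  note M = assms(2) and \<phi> = assms(4) and RD = assms(5) and \<Delta> = assms(6)
  note K = assms(7) and ij = assms(8,9,10)
  note \<beta>j = assms(14) and \<rho> = assms(16)
  have "(2::real) powr 0 < 2 powr Ri" using assms(17) by (intro powr_less_mono) auto
  then have \<epsilon>i: "\<epsilon>i > 0" using assms(19) by simp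
  have "(2::real) powr 0 < 2 powr Rj" using assms(18) by (intro powr_less_mono) auto
  then have \<epsilon>j: "\<epsilon>j > 0" using assms(20) by simp
  note Gdef = assms(21) and Poi = assms(22) and Poj = assms(23) and Fdef = assms(24)
  define V where "V k \<omega> = (r k \<omega>, \<theta> k \<omega>, a k \<omega>)" for k \<omega>
  define gg where "gg v = gain M \<alpha> \<theta>b (fst v) (fst (snd v)) (snd (snd v))" for v :: "real \<times> real \<times> complex"
  define X where "X l \<omega> = gain M \<alpha> \<theta>b (r l \<omega>) (\<theta> l \<omega>) (a l \<omega>)" for l \<omega>
  have gg_m: "gg \<in> borel_measurable (lborel \<Otimes>\<^sub>M lborel \<Otimes>\<^sub>M lborel)"
  proof -
    have "gg = (\<lambda>v. (cmod (snd (snd v)))\<^sup>2 * fejer M (pi * (\<theta>b - fst (snd v))) / (1 + fst v powr \<alpha>))"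
      unfolding gg_def using gain_eq[OF M] by (intro ext) simp
    also have "\<dots> \<in> borel_measurable (lborel \<Otimes>\<^sub>M lborel \<Otimes>\<^sub>M lborel)" by measurable
    finally show ?thesis .
  qed
  have indX: "indep_vars (\<lambda>_. borel) X {..<K}"
  proof -
    have "indep_vars (\<lambda>_. borel) (\<lambda>k \<omega>. gg ((\<lambda>k \<omega>. (r k \<omega>, \<theta> k \<omega>, a k \<omega>)) k \<omega>)) {..<K}"
      by (rule indep_vars_compose2[OF indep]) (use gg_m in simp)
    then show ?thesis unfolding X_def gg_def by simp
  qed
  have pX: "prob {\<omega> \<in> space \<Omega>. X l \<omega> \<in> B} = F y"
    if l: "l < K" and y: "y > 0" and B: "B = {..y} \<or> B = {..<y}" for l y B
  proof -
    have rel: "(if B = {..y} then (\<le>) else (<)) = (\<le>) \<or> (if B = {..y} then (\<le>) else (<)) = ((<) :: real \<Rightarrow> real \<Rightarrow> bool)"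
      by simp
    have "{\<omega> \<in> space \<Omega>. X l \<omega> \<in> B} = {\<omega> \<in> space \<Omega>. (if B = {..y} then (\<le>) else (<))
          (gain M \<alpha> \<theta>b (fst (V l \<omega>)) (fst (snd (V l \<omega>))) (snd (snd (V l \<omega>)))) y}"
      using B unfolding X_def V_def by (auto simp: lessThan_def atMost_def)
    also have "measure \<Omega> \<dots> = Fpi M \<alpha> \<phi> RD \<Delta> \<theta>b y"
      by (rule gain_cdf[OF P distr[OF l, folded V_def] M \<phi> RD \<Delta> y rel])
    finally show ?thesis using Fdef by simp
  qed
  have cdf: "prob {\<omega> \<in> space \<Omega>. G k \<omega> \<le> y} = order_cdf_sum K k (F y)"
      "{\<omega> \<in> space \<Omega>. G k \<omega> \<le> y} \<in> events"
      "prob {\<omega> \<in> space \<Omega>. G k \<omega> < y} = order_cdf_sum K k (F y)"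
    if k: "1 \<le> k" "k \<le> K" and y: "y > 0" for k y
  proof -
    have pt1: "G k \<omega> \<le> y \<longleftrightarrow> k \<le> card {l. l < K \<and> X l \<omega> \<in> {..y}}" for \<omega>
    proof -
      have "G k \<omega> = ord_stat K (\<lambda>l. X l \<omega>) k" unfolding Gdef X_def ..
      then show ?thesis using ord_stat_pred[OF k, where P="\<lambda>x. x \<le> y" and g="\<lambda>l. X l \<omega>"] by simp
    qed
    have pt2: "G k \<omega> < y \<longleftrightarrow> k \<le> card {l. l < K \<and> X l \<omega> \<in> {..<y}}" for \<omega>
    proof -
      have "G k \<omega> = ord_stat K (\<lambda>l. X l \<omega>) k" unfolding Gdef X_def ..
      then show ?thesis using ord_stat_pred[OF k, where P="\<lambda>x. x < y" and g="\<lambda>l. X l \<omega>"] by simp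
    qed
    have e1: "{\<omega> \<in> space \<Omega>. G k \<omega> \<le> y} = {\<omega> \<in> space \<Omega>. k \<le> card {l. l < K \<and> X l \<omega> \<in> {..y}}}"
      using pt1 by blast
    have e2: "{\<omega> \<in> space \<Omega>. G k \<omega> < y} = {\<omega> \<in> space \<Omega>. k \<le> card {l. l < K \<and> X l \<omega> \<in> {..<y}}}"
      using pt2 by blast
    have K1: "1 \<le> K" using k by simp
    have Ab1: "{..y} \<in> sets borel" by simp
    have Ab2: "{..<y} \<in> sets borel" by simp
    have p1: "prob {\<omega> \<in> space \<Omega>. X l \<omega> \<in> {..y}} = F y" if "l < K" for l using pX[OF that y, of "{..y}"] by simp
    have p2: "prob {\<omega> \<in> space \<Omega>. X l \<omega> \<in> {..<y}} = F y" if "l < K" for l using pX[OF that y, of "{..<y}"] by simp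
    show "prob {\<omega> \<in> space \<Omega>. G k \<omega> \<le> y} = order_cdf_sum K k (F y)"
    proof -
      have "prob {\<omega> \<in> space \<Omega>. k \<le> card {l. l < K \<and> X l \<omega> \<in> {..y}}} = Tsum K k (F y)"
        by (rule count_prob(1)[OF indX Ab1 p1 k(2) K1])
      then show ?thesis unfolding e1 Tsum_eq[OF k] .
    qed
    show "{\<omega> \<in> space \<Omega>. G k \<omega> \<le> y} \<in> events"
      unfolding e1 by (rule count_prob(2)[OF indX Ab1 p1 k(2) K1])
    show "prob {\<omega> \<in> space \<Omega>. G k \<omega> < y} = order_cdf_sum K k (F y)"
    proof -
      have "prob {\<omega> \<in> space \<Omega>. k \<le> card {l. l < K \<and> X l \<omega> \<in> {..<y}}} = Tsum K k (F y)"
        by (rule count_prob(1)[OF indX Ab2 p2 k(2) K1])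
      then show ?thesis unfolding e2 Tsum_eq[OF k] .
    qed
  qed
  have Gnn: "G k \<omega> \<ge> 0" if "1 \<le> k" "k \<le> K" for k \<omega>
  proof -
    have "G k \<omega> \<in> set (sort (map (\<lambda>l. X l \<omega>) [0..<K]))"
      unfolding Gdef ord_stat_def X_def using that by (intro nth_mem) simp
    then obtain l where "G k \<omega> = X l \<omega>" by auto
    then show ?thesis unfolding X_def gain_def by simp
  qed
  have sinr_gt: "(g * \<beta>i\<^sup>2 / (g * \<beta>j\<^sup>2 + 1 / \<rho>) > \<epsilon>i) \<longleftrightarrow> g * (\<beta>i\<^sup>2 - \<beta>j\<^sup>2 * \<epsilon>i) > \<epsilon>i / \<rho>"
    if "g \<ge> 0" for g
  proof -
    have "g * \<beta>j\<^sup>2 + 1 / \<rho> > 0" using that \<rho> by (simp add: add_nonneg_pos)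
    then show ?thesis by (simp add: field_simps)
  qed
  have sinr_lt: "(g * \<beta>i\<^sup>2 / (g * \<beta>j\<^sup>2 + 1 / \<rho>) < \<epsilon>i) \<longleftrightarrow> g * (\<beta>i\<^sup>2 - \<beta>j\<^sup>2 * \<epsilon>i) < \<epsilon>i / \<rho>"
    if "g \<ge> 0" for g
  proof -
    have "g * \<beta>j\<^sup>2 + 1 / \<rho> > 0" using that \<rho> by (simp add: add_nonneg_pos)
    then show ?thesis by (simp add: field_simps)
  qed
  have Gj: "1 \<le> j" "j \<le> K" and Gi: "1 \<le> i" "i \<le> K" using ij by auto
  show ?thesis
  proof (intro conjI impI)
    assume D: "\<beta>i\<^sup>2 \<le> \<beta>j\<^sup>2 * \<epsilon>i"
    have E0: "{\<omega> \<in> space \<Omega>. G j \<omega> * \<beta>i\<^sup>2 / (G j \<omega> * \<beta>j\<^sup>2 + 1 / \<rho>) > \<epsilon>i \<and> \<rho> * G j \<omega> * \<beta>j\<^sup>2 > \<epsilon>j} = {}"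
    proof (rule ccontr)
      assume "{\<omega> \<in> space \<Omega>. G j \<omega> * \<beta>i\<^sup>2 / (G j \<omega> * \<beta>j\<^sup>2 + 1 / \<rho>) > \<epsilon>i \<and> \<rho> * G j \<omega> * \<beta>j\<^sup>2 > \<epsilon>j} \<noteq> {}"
      then obtain \<omega> where w: "G j \<omega> * \<beta>i\<^sup>2 / (G j \<omega> * \<beta>j\<^sup>2 + 1 / \<rho>) > \<epsilon>i" by auto
      have g0: "G j \<omega> \<ge> 0" using Gnn[OF Gj] .
      then have "G j \<omega> * (\<beta>i\<^sup>2 - \<beta>j\<^sup>2 * \<epsilon>i) > \<epsilon>i / \<rho>" using w sinr_gt by blast
      moreover have "G j \<omega> * (\<beta>i\<^sup>2 - \<beta>j\<^sup>2 * \<epsilon>i) \<le> 0" using g0 D by (simp add: mult_nonneg_nonpos)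
      moreover have "\<epsilon>i / \<rho> > 0" using \<epsilon>i \<rho> by simp
      ultimately show False by linarith
    qed
    show "Poj = 1" unfolding Poj E0 by simp
  next
    assume D: "\<beta>i\<^sup>2 > \<beta>j\<^sup>2 * \<epsilon>i"
    define Dd where "Dd = \<beta>i\<^sup>2 - \<beta>j\<^sup>2 * \<epsilon>i"
    have Dd: "Dd > 0" unfolding Dd_def using D by simp
    define \<eta>i where "\<eta>i = (\<epsilon>i / \<rho>) / Dd"
    define \<eta>j where "\<eta>j = max \<eta>i (\<epsilon>j / (\<rho> * \<beta>j\<^sup>2))"
    have \<eta>i: "\<eta>i > 0" unfolding \<eta>i_def using \<epsilon>i \<rho> Dd by simp
    have \<eta>j: "\<eta>j > 0" unfolding \<eta>j_def using \<eta>i by simp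
    have gi: "g * Dd > \<epsilon>i / \<rho> \<longleftrightarrow> g > \<eta>i" for g unfolding \<eta>i_def using Dd \<rho> by (simp add: field_simps)
    have gi': "g * Dd < \<epsilon>i / \<rho> \<longleftrightarrow> g < \<eta>i" for g unfolding \<eta>i_def using Dd \<rho> by (simp add: field_simps)
    have gj: "\<rho> * g * \<beta>j\<^sup>2 > \<epsilon>j \<longleftrightarrow> g > \<epsilon>j / (\<rho> * \<beta>j\<^sup>2)" for g
      using \<rho> \<beta>j by (simp add: field_simps)
    have evj: "{\<omega> \<in> space \<Omega>. G j \<omega> * \<beta>i\<^sup>2 / (G j \<omega> * \<beta>j\<^sup>2 + 1 / \<rho>) > \<epsilon>i \<and> \<rho> * G j \<omega> * \<beta>j\<^sup>2 > \<epsilon>j}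
        = space \<Omega> - {\<omega> \<in> space \<Omega>. G j \<omega> \<le> \<eta>j}"
    proof (intro set_eqI iffI)
      fix \<omega> assume "\<omega> \<in> {\<omega> \<in> space \<Omega>. G j \<omega> * \<beta>i\<^sup>2 / (G j \<omega> * \<beta>j\<^sup>2 + 1 / \<rho>) > \<epsilon>i \<and> \<rho> * G j \<omega> * \<beta>j\<^sup>2 > \<epsilon>j}"
      then show "\<omega> \<in> space \<Omega> - {\<omega> \<in> space \<Omega>. G j \<omega> \<le> \<eta>j}"
        using sinr_gt[OF Gnn[OF Gj]] gi gj unfolding Dd_def[symmetric] \<eta>j_def by auto
    next
      fix \<omega> assume "\<omega> \<in> space \<Omega> - {\<omega> \<in> space \<Omega>. G j \<omega> \<le> \<eta>j}"
      then show "\<omega> \<in> {\<omega> \<in> space \<Omega>. G j \<omega> * \<beta>i\<^sup>2 / (G j \<omega> * \<beta>j\<^sup>2 + 1 / \<rho>) > \<epsilon>i \<and> \<rho> * G j \<omega> * \<beta>j\<^sup>2 > \<epsilon>j}"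
        using sinr_gt[OF Gnn[OF Gj]] gi gj unfolding Dd_def[symmetric] \<eta>j_def by auto
    qed
    have "Poj = 1 - (1 - prob {\<omega> \<in> space \<Omega>. G j \<omega> \<le> \<eta>j})"
      unfolding Poj evj using prob_compl[OF cdf(2)[OF Gj \<eta>j]] by simp
    also have "\<dots> = order_cdf_sum K j (F \<eta>j)" using cdf(1)[OF Gj \<eta>j] by simp
    finally show "Poj = order_cdf_sum K j (F (max ((\<epsilon>i / \<rho>) / (\<beta>i\<^sup>2 - \<beta>j\<^sup>2 * \<epsilon>i)) (\<epsilon>j / (\<rho> * \<beta>j\<^sup>2))))"
      unfolding \<eta>j_def \<eta>i_def Dd_def .
    have evi: "{\<omega> \<in> space \<Omega>. G i \<omega> * \<beta>i\<^sup>2 / (G i \<omega> * \<beta>j\<^sup>2 + 1 / \<rho>) < \<epsilon>i} = {\<omega> \<in> space \<Omega>. G i \<omega> < \<eta>i}"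
      using sinr_lt[OF Gnn[OF Gi]] gi' unfolding Dd_def[symmetric] by auto
    show "Poi = order_cdf_sum K i (F ((\<epsilon>i / \<rho>) / (\<beta>i\<^sup>2 - \<beta>j\<^sup>2 * \<epsilon>i)))"
      unfolding Poi evi using cdf(3)[OF Gi \<eta>i] unfolding \<eta>i_def Dd_def .
  qed
qed

end
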